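(* Let $C$ be a linear code over $\mathbb{Z}_4+u\mathbb{Z}_4$ of length $n$ and let $C^{\perp}$ be its dual. Then $$swe_{C^{\perp}}(X,Y,Z,W,S)=\frac{1}{|C|}\,swe_C\big(6S+4W+X+Y+4Z,\ 6S-4W+X+Y-4Z,\ -2W+X-Y+2Z,\ 2W+X-Y-2Z,\ -2S+X+Y\big).$$
   Context: $\mathbb{Z}_4+u\mathbb{Z}_4$ is the commutative ring of characteristic $4$ with $u^2=0$. A linear code of length $n$ is a submodule of $(\mathbb{Z}_4+u\mathbb{Z}_4)^n$; its dual $C^\perp$ is taken with respect to the Euclidean inner product $\sum_i x_iy_i$ computed in the ring. For a codeword $c$, let $n_0(c)$ be the number of coordinates equal to $0$, $n_4(c)$ the number equal to $2u$, $n_3(c)$ the number in $\{1+u,1+2u,3+2u,3+3u\}$, $n_1(c)$ the number in $\{1,1+3u,3,3+u\}$, and $n_2(c)$ the number in $\{2,u,3u,2+u,2+2u,2+3u\}$. The symmetrized weight enumerator is $swe_C(X,Y,Z,W,S)=\sum_{c\in C}X^{n_0(c)}Y^{n_4(c)}Z^{n_3(c)}W^{n_1(c)}S^{n_2(c)}$. *)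

theory Defs
  imports Complex_Main "HOL-Library.Numeral_Type"
begin

text \<open>The ring Z4 + u Z4 (u^2 = 0): the element a + b u is represented by the pair (a, b)
  with a, b in Z4 (the type 4 from HOL-Library.Numeral_Type).\<close>

type_synonym R = "4 \<times> 4"

definition radd :: "R \<Rightarrow> R \<Rightarrow> R" where
  "radd x y = (fst x + fst y, snd x + snd y)"

definition rmul :: "R \<Rightarrow> R \<Rightarrow> R" where
  "rmul x y = (fst x * fst y, fst x * snd y + snd x * fst y)"

definition rzero :: R where "rzero = (0, 0)"

definition vadd :: "R list \<Rightarrow> R list \<Rightarrow> R list" where
  "vadd x y = map2 radd x y"

definition smul :: "R \<Rightarrow> R list \<Rightarrow> R list" where
  "smul r x = map (rmul r) x"

definition inner :: "R list \<Rightarrow> R list \<Rightarrow> R" where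
  "inner x y = foldr radd (map2 rmul x y) rzero"

definition space :: "nat \<Rightarrow> R list set" where
  "space n = {x. length x = n}"

definition linear_code :: "nat \<Rightarrow> R list set \<Rightarrow> bool" where
  "linear_code n C \<longleftrightarrow> C \<subseteq> space n \<and> replicate n rzero \<in> C
     \<and> (\<forall>x\<in>C. \<forall>y\<in>C. vadd x y \<in> C) \<and> (\<forall>r. \<forall>x\<in>C. smul r x \<in> C)"

definition dual_code :: "nat \<Rightarrow> R list set \<Rightarrow> R list set" where
  "dual_code n C = {y \<in> space n. \<forall>x\<in>C. inner x y = rzero}"

definition cls0 :: "R set" where "cls0 = {(0,0)}"
definition cls4 :: "R set" where "cls4 = {(0,2)}"
definition cls3 :: "R set" where "cls3 = {(1,1),(1,2),(3,2),(3,3)}"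
definition cls1 :: "R set" where "cls1 = {(1,0),(1,3),(3,0),(3,1)}"
definition cls2 :: "R set" where "cls2 = {(2,0),(0,1),(0,3),(2,1),(2,2),(2,3)}"

definition cnt :: "R set \<Rightarrow> R list \<Rightarrow> nat" where
  "cnt A c = length (filter (\<lambda>a. a \<in> A) c)"

definition swe :: "R list set \<Rightarrow> 'a::comm_ring_1 \<Rightarrow> 'a \<Rightarrow> 'a \<Rightarrow> 'a \<Rightarrow> 'a \<Rightarrow> 'a" where
  "swe C X Y Z W S = (\<Sum>c\<in>C. X ^ cnt cls0 c * Y ^ cnt cls4 c * Z ^ cnt cls3 c
        * W ^ cnt cls1 c * S ^ cnt cls2 c)"

end

theory Submission
  imports Defs
begin
lemma four_cases: "(x::4) = 0 \<or> x = 1 \<or> x = 2 \<or> x = 3"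
proof (induct x)
  case (of_int z)
  then have "z < 4" by simp
  then have "z = 0 \<or> z = 1 \<or> z = 2 \<or> z = 3" using of_int by arith
  then show ?case by auto
qed
lemma ex4: "(\<exists>x::4. P x) \<longleftrightarrow> P 0 \<or> P 1 \<or> P 2 \<or> P 3"
  using four_cases by metis
lemma UNIV_4: "(UNIV::4 set) = {0,1,2,3}" using four_cases by auto

definition om :: "4 \<Rightarrow> complex" where
  "om z = (if z = 0 then 1 else if z = 1 then \<i> else if z = 2 then -1 else - \<i>)"
lemma om_add: "om (a + b) = om a * om b"
  using four_cases[of a] four_cases[of b] by (auto simp: om_def)
definition chi :: "R \<Rightarrow> complex" where "chi p = om (fst p + snd p)"
lemma chi_add: "chi (radd p q) = chi p * chi q"
  by (simp add: chi_def radd_def om_add[symmetric] algebra_simps)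
lemma chi_zero: "chi rzero = 1" by (simp add: chi_def rzero_def om_def)
lemma chi_2u: "chi (0,2) = -1" by (simp add: chi_def om_def)

lemma ideal_min: "a \<noteq> rzero \<Longrightarrow> \<exists>r. rmul r a = (0,2)"
proof -
  assume a: "a \<noteq> rzero"
  obtain a1 a2 where aa: "a = (a1,a2)" by (cases a)
  have "\<exists>r1 r2. rmul (r1,r2) (a1,a2) = (0,2)"
    using a aa four_cases[of a1] four_cases[of a2]
    apply (elim disjE)
    by (simp_all add: rzero_def rmul_def ex4)
  then show ?thesis using aa by auto
qed

definition mval :: "'a \<Rightarrow> 'a \<Rightarrow> 'a \<Rightarrow> 'a \<Rightarrow> 'a \<Rightarrow> R \<Rightarrow> 'a" where
  "mval X Y Z W S r = (if r \<in> cls0 then X else if r \<in> cls4 then Y else if r \<in> cls3 then Z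
      else if r \<in> cls1 then W else S)"

lemma mono_eq: "(X::'a::comm_ring_1) ^ cnt cls0 c * Y ^ cnt cls4 c * Z ^ cnt cls3 c
        * W ^ cnt cls1 c * S ^ cnt cls2 c = prod_list (map (mval X Y Z W S) c)"
proof (induct c)
  case Nil
  then show ?case by (simp add: cnt_def)
next
  case (Cons a c)
  obtain a1 a2 where aa: "a = (a1,a2)" by (cases a)
  show ?case
    using four_cases[of a1] four_cases[of a2] Cons[symmetric]
    by (elim disjE; simp add: aa cnt_def cls0_def cls1_def cls2_def cls3_def cls4_def mval_def mult_ac)
qed

lemma UNIV_R: "(UNIV::R set) = {0,1,2,3} \<times> {0,1,2,3}"
  using UNIV_4 UNIV_Times_UNIV by metis

lemma T_eq: "(\<Sum>r\<in>UNIV. chi (rmul a r) * mval X Y Z W S r) =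
   mval (6*S + 4*W + X + Y + 4*Z) (6*S - 4*W + X + Y - 4*Z)
            (-2*W + X - Y + 2*Z) (2*W + X - Y - 2*Z) (-2*S + X + Y) a"
proof -
  obtain a1 a2 where aa: "a = (a1,a2)" by (cases a)
  show ?thesis
    unfolding UNIV_R aa
    using four_cases[of a1] four_cases[of a2]
    by (elim disjE; simp add: sum.cartesian_product[symmetric] rmul_def chi_def om_def mval_def
        cls0_def cls1_def cls2_def cls3_def cls4_def; algebra)
qed

definition Psi :: "R list \<Rightarrow> R list \<Rightarrow> complex" where
  "Psi x y = prod_list (map2 (\<lambda>a b. chi (rmul a b)) x y)"

lemma inner_Cons: "inner (a#x) (b#y) = radd (rmul a b) (inner x y)"
  by (simp add: inner_def)

lemma Psi_inner: "length x = length y \<Longrightarrow> Psi x y = chi (inner x y)"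
proof (induct x arbitrary: y)
  case Nil then show ?case by (simp add: Psi_def inner_def chi_zero)
next
  case (Cons a x)
  then obtain b y' where "y = b # y'" by (cases y) auto
  with Cons show ?case by (simp add: Psi_def inner_Cons chi_add)
qed

lemma rmul_radd_left: "rmul (radd a c) b = radd (rmul a b) (rmul c b)"
  by (simp add: rmul_def radd_def algebra_simps)
lemma rmul_radd_right: "rmul r (radd a b) = radd (rmul r a) (rmul r b)"
  by (simp add: rmul_def radd_def algebra_simps)
lemma rmul_assoc: "rmul (rmul r a) b = rmul r (rmul a b)"
  by (simp add: rmul_def algebra_simps)
lemma rmul_zero: "rmul r rzero = rzero"
  by (simp add: rmul_def rzero_def)

lemma Psi_vadd: "length x0 = length y \<Longrightarrow> length x = length y \<Longrightarrow>
   Psi (vadd x0 x) y = Psi x0 y * Psi x y"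
proof (induct x0 arbitrary: x y)
  case Nil then show ?case by (simp add: Psi_def vadd_def)
next
  case (Cons a x0)
  then obtain b y' where y: "y = b # y'" by (cases y) auto
  from Cons obtain c x' where x: "x = c # x'" by (cases x) auto
  have "Psi (vadd x0 x') y' = Psi x0 y' * Psi x' y'" using Cons y x by simp
  then show ?case by (simp add: y x Psi_def vadd_def rmul_radd_left chi_add)
qed

lemma inner_smul: "length x = length y \<Longrightarrow> inner (smul r x) y = rmul r (inner x y)"
proof (induct x arbitrary: y)
  case Nil then show ?case by (simp add: smul_def inner_def rmul_zero)
next
  case (Cons a x)
  then obtain b y' where y: "y = b # y'" by (cases y) auto
  with Cons show ?case by (simp add: smul_def inner_Cons rmul_radd_right rmul_assoc)
qed

lemma length_vadd: "length (vadd x y) = min (length x) (length y)"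
  by (simp add: vadd_def)
lemma length_smul: "length (smul r x) = length x"
  by (simp add: smul_def)

lemma finite_space: "finite (space n)"
proof -
  have "space n = {xs. set xs \<subseteq> UNIV \<and> length xs = n}" by (simp add: space_def)
  then show ?thesis using finite_lists_length_eq[of "UNIV::R set" n] by simp
qed

lemma vadd_inj: "length x0 = n \<Longrightarrow> length x = n \<Longrightarrow> length x' = n \<Longrightarrow>
   vadd x0 x = vadd x0 x' \<Longrightarrow> x = x'"
proof (rule nth_equalityI)
  assume l: "length x0 = n" "length x = n" "length x' = n" and e: "vadd x0 x = vadd x0 x'"
  show "length x = length x'" using l by simp
  fix i assume "i < length x"
  then have i: "i < n" using l by simp
  have "vadd x0 x ! i = vadd x0 x' ! i" using e by simp
  then have "radd (x0!i) (x!i) = radd (x0!i) (x'!i)" using i l by (simp add: vadd_def)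
  then show "x ! i = x' ! i" by (simp add: radd_def prod_eq_iff)
qed

lemma char_sum:
  assumes C: "linear_code n C" and y: "y \<in> space n"
  shows "(\<Sum>x\<in>C. Psi x y) = (if y \<in> dual_code n C then of_nat (card C) else 0)"
proof -
  have Csp: "C \<subseteq> space n" and add: "\<forall>x\<in>C. \<forall>x'\<in>C. vadd x x' \<in> C"
    and sm: "\<forall>r. \<forall>x\<in>C. smul r x \<in> C" using C by (auto simp: linear_code_def)
  have fin: "finite C" using Csp finite_space finite_subset by blast
  have ly: "length y = n" using y by (simp add: space_def)
  show ?thesis
  proof (cases "y \<in> dual_code n C")
    case True
    then have "\<forall>x\<in>C. Psi x y = 1" using Csp ly
      by (auto simp: dual_code_def Psi_inner space_def chi_zero subset_iff)
    then show ?thesis using True by simp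
  next
    case False
    then obtain x1 where x1: "x1 \<in> C" "inner x1 y \<noteq> rzero" using y by (auto simp: dual_code_def)
    then obtain r where r: "rmul r (inner x1 y) = (0,2)" using ideal_min by blast
    define x0 where "x0 = smul r x1"
    have x0C: "x0 \<in> C" using sm x1(1) unfolding x0_def by blast
    have lx1: "length x1 = n" using x1 Csp by (auto simp: space_def)
    have lx0: "length x0 = n" using x0C Csp by (auto simp: space_def)
    have psi0: "Psi x0 y = -1" using r lx1 ly
      by (simp add: x0_def Psi_inner length_smul inner_smul chi_2u)
    have inj: "inj_on (vadd x0) C"
      by (rule inj_onI) (use vadd_inj lx0 Csp in \<open>auto simp: space_def subset_iff\<close>)
    have img: "vadd x0 ` C = C"
      by (rule endo_inj_surj[OF fin _ inj]) (use add x0C in auto)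
    have "(\<Sum>x\<in>C. Psi x y) = (\<Sum>x\<in>vadd x0 ` C. Psi x y)" using img by simp
    also have "\<dots> = (\<Sum>x\<in>C. Psi (vadd x0 x) y)" by (simp add: sum.reindex[OF inj])
    also have "\<dots> = (\<Sum>x\<in>C. Psi x0 y * Psi x y)"
      by (rule sum.cong) (use Psi_vadd lx0 ly Csp in \<open>auto simp: space_def subset_iff\<close>)
    also have "\<dots> = - (\<Sum>x\<in>C. Psi x y)" by (simp add: psi0 sum_negf)
    finally show ?thesis using False by simp
  qed
qed

lemma space_Suc: "space (Suc n) = (\<lambda>(r,ys). r # ys) ` (UNIV \<times> space n)"
  by (auto simp: space_def image_iff length_Suc_conv)

lemma sum_prod_lists:
  "(\<Sum>y\<in>space (length xs). prod_list (map2 F xs y)) =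
     prod_list (map (\<lambda>a. \<Sum>r\<in>UNIV. (F a r :: complex)) xs)"
proof (induct xs)
  case Nil
  have "space 0 = {[]}" by (auto simp: space_def)
  then show ?case by simp
next
  case (Cons a xs)
  have inj: "inj_on (\<lambda>(r,ys). r # ys) (UNIV \<times> space (length xs))"
    by (rule inj_onI) auto
  have "(\<Sum>y\<in>space (length (a#xs)). prod_list (map2 F (a#xs) y)) =
     (\<Sum>(r,ys)\<in>UNIV \<times> space (length xs). F a r * prod_list (map2 F xs ys))"
    unfolding length_Cons space_Suc sum.reindex[OF inj] by (simp add: case_prod_unfold)
  also have "\<dots> = (\<Sum>r\<in>UNIV. F a r) * (\<Sum>ys\<in>space (length xs). prod_list (map2 F xs ys))"
    by (simp add: sum_product sum.cartesian_product)
  finally show ?case using Cons by simp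
qed

lemma prod_list_map2_mult: "length x = length y \<Longrightarrow>
   prod_list (map2 f x y) * prod_list (map g y) = prod_list (map2 (\<lambda>a b. f a b * (g b :: complex)) x y)"
proof (induct x arbitrary: y)
  case Nil then show ?case by simp
next
  case (Cons a x)
  then obtain b y' where "y = b # y'" by (cases y) auto
  with Cons show ?case by (simp add: mult_ac)
qed

lemma swe_of_real: "complex_of_real (swe C X Y Z W S) =
  swe C (of_real X) (of_real Y) (of_real Z) (of_real W) (of_real S)"
  by (simp add: swe_def)

lemma swe_prod: "swe C X Y Z W S = (\<Sum>c\<in>C. prod_list (map (mval X Y Z W S) c))"
  by (simp add: swe_def mono_eq)

theorem theorem3p7:
  fixes n :: nat and C :: "R list set" and X Y Z W S :: real
  assumes "linear_code n C"
  shows "swe (dual_code n C) X Y Z W S =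
    (1 / real (card C)) *
      swe C (6*S + 4*W + X + Y + 4*Z) (6*S - 4*W + X + Y - 4*Z)
            (-2*W + X - Y + 2*Z) (2*W + X - Y - 2*Z) (-2*S + X + Y)"
proof -
  define x where "x = complex_of_real X"
  define y where "y = complex_of_real Y"
  define z where "z = complex_of_real Z"
  define w where "w = complex_of_real W"
  define s where "s = complex_of_real S"
  define m where "m = mval x y z w s"
  define m' where "m' = mval (6*s + 4*w + x + y + 4*z) (6*s - 4*w + x + y - 4*z)
            (-2*w + x - y + 2*z) (2*w + x - y - 2*z) (-2*s + x + y)"
  define D where "D = dual_code n C"
  define P where "P = (\<lambda>v. prod_list (map m v))"
  have Csp: "C \<subseteq> space n" and z0: "replicate n rzero \<in> C"
    using assms by (auto simp: linear_code_def)
  have fin: "finite C" using Csp finite_space finite_subset by blast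
  have cpos: "card C \<noteq> 0" using fin z0 by (auto simp: card_eq_0_iff)
  have Dsp: "D \<subseteq> space n" by (auto simp: D_def dual_code_def)
  have "complex_of_real (swe D X Y Z W S) = (\<Sum>v\<in>D. P v)"
    unfolding swe_of_real by (simp add: swe_prod P_def m_def x_def y_def z_def w_def s_def)
  also have "\<dots> = (\<Sum>v\<in>space n. if v \<in> D then P v else 0)"
    using sum.inter_restrict[where A="space n" and B=D and g=P] finite_space Dsp by (simp add: Int_absorb1)
  also have "\<dots> = (\<Sum>v\<in>space n. (1 / of_nat (card C)) * (\<Sum>c\<in>C. Psi c v) * P v)"
    by (rule sum.cong) (use char_sum[OF assms] cpos in \<open>auto simp: D_def\<close>)
  also have "\<dots> = (1 / of_nat (card C)) * (\<Sum>c\<in>C. \<Sum>v\<in>space n. Psi c v * P v)"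
    by (simp add: sum_distrib_left sum_distrib_right sum.swap[of _ C] mult_ac)
  also have "(\<Sum>c\<in>C. \<Sum>v\<in>space n. Psi c v * P v) = (\<Sum>c\<in>C. P' c)"
    if "P' = (\<lambda>c. prod_list (map m' c))" for P'
  proof (rule sum.cong)
    fix c assume c: "c \<in> C"
    then have lc: "length c = n" using Csp by (auto simp: space_def)
    have "(\<Sum>v\<in>space n. Psi c v * P v) =
        (\<Sum>v\<in>space (length c). prod_list (map2 (\<lambda>a b. chi (rmul a b) * m b) c v))"
      by (rule sum.cong) (auto simp: lc Psi_def P_def space_def prod_list_map2_mult)
    also have "\<dots> = prod_list (map (\<lambda>a. \<Sum>r\<in>UNIV. chi (rmul a r) * m r) c)"
      by (rule sum_prod_lists)
    also have "\<dots> = P' c" by (simp add: that m_def m'_def T_eq)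
    finally show "(\<Sum>v\<in>space n. Psi c v * P v) = P' c" .
  qed simp
  also have "(\<Sum>c\<in>C. prod_list (map m' c)) = complex_of_real (swe C (6*S + 4*W + X + Y + 4*Z) (6*S - 4*W + X + Y - 4*Z)
            (-2*W + X - Y + 2*Z) (2*W + X - Y - 2*Z) (-2*S + X + Y))"
    unfolding swe_of_real by (simp add: swe_prod m'_def x_def y_def z_def w_def s_def)
  finally have "complex_of_real (swe D X Y Z W S) = complex_of_real ((1 / real (card C)) *
      swe C (6*S + 4*W + X + Y + 4*Z) (6*S - 4*W + X + Y - 4*Z)
            (-2*W + X - Y + 2*Z) (2*W + X - Y - 2*Z) (-2*S + X + Y))"
    by simp
  then show ?thesis unfolding D_def of_real_eq_iff .
qed
end
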